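(* Let $(M,g)$ be a $d$-dimensional Lorentzian manifold with $d>4$, let $p\in M$, and let $\{\ell,n,m^3,\dots,m^d\}$ be a null frame at $p$. Suppose the Weyl tensor $C$ at $p$ is invariant under the subgroup of the Lorentz group at $p$ that fixes $\ell$ and $n$ and acts as $SO(d-2)$, in its standard representation, on $\mathrm{span}\{m^3,\dots,m^d\}$. Then, in this null frame, the Weyl tensor is of type D(bcd): all components of nonzero boost weight vanish, and $\bar S_{ij}=0$, $\bar C_{ijkl}=0$ and $A_{ij}=0$. Consequently the Weyl tensor at $p$ has only one independent component, namely $\bar R$.
   Context: Null frame convention: the metric is $g=2\,\ell\, n+\delta_{ij}m^im^j$, i.e. $g(\ell,n)=1$, $g(m^i,m^j)=\delta_{ij}$, all other products zero. Frame indices: $0$ refers to $\ell$, $1$ to $n$, and $i,j,k,l\in\{3,\dots,d\}$ to the $m^i$; set $n=d-2$ (number of spatial directions). $C_{abcd}$ are the frame components of the Weyl tensor. The boost weight of a component $C_{abcd}$ is (number of indices equal to $0$) minus (number of indices equal to $1$). Define $\bar R_{ij}=\sum_k C_{kikj}$, $\bar R=\sum_i \bar R_{ii}$, $\bar S_{ij}=\bar R_{ij}-\frac1{n}\bar R\,\delta_{ij}$ (trace-free part), $\bar C_{ijkl}$ = the Weyl (totally trace-free) part of the algebraic curvature tensor $C_{ijkl}$ on $\mathbb R^{n}$ with Euclidean metric $\delta_{ij}$, and $A_{ij}=C_{01ij}$. *)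

theory Defs
  imports "HOL-Analysis.Analysis"
begin

text \<open>Frame indices: 0 = l, 1 = n, 3..d = the spacelike m^i (index 2 is not used).
  A tensor at p is represented by its frame components, a function
  nat => nat => nat => nat => real, only meaningful on frame indices.\<close>

definition sp :: "nat \<Rightarrow> nat set" where
  "sp d = {3..d}"

definition idx :: "nat \<Rightarrow> nat set" where
  "idx d = {0, 1} \<union> sp d"

definition kdelta :: "nat \<Rightarrow> nat \<Rightarrow> real" where
  "kdelta i j = (if i = j then 1 else 0)"

text \<open>Frame components of the metric g = 2 l n + delta_ij m^i m^j (its inverse has the
  same components).\<close>
definition eta :: "nat \<Rightarrow> nat \<Rightarrow> real" where
  "eta a b = (if (a = 0 \<and> b = 1) \<or> (a = 1 \<and> b = 0) then 1
              else if a \<ge> 3 \<and> b \<ge> 3 \<and> a = b then 1 else 0)"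

definition is_weyl :: "nat \<Rightarrow> (nat \<Rightarrow> nat \<Rightarrow> nat \<Rightarrow> nat \<Rightarrow> real) \<Rightarrow> bool" where
  "is_weyl d C \<longleftrightarrow>
     (\<forall>a\<in>idx d. \<forall>b\<in>idx d. \<forall>c\<in>idx d. \<forall>e\<in>idx d.
        C a b c e = - C b a c e \<and> C a b c e = - C a b e c \<and> C a b c e = C c e a b \<and>
        C a b c e + C a c e b + C a e b c = 0) \<and>
     (\<forall>b\<in>idx d. \<forall>e\<in>idx d. (\<Sum>a\<in>idx d. \<Sum>c\<in>idx d. eta a c * C a b c e) = 0)"

definition det_on :: "nat set \<Rightarrow> (nat \<Rightarrow> nat \<Rightarrow> real) \<Rightarrow> real" where
  "det_on S R = (\<Sum>p\<in>{p. p permutes S}. of_int (sign p) * (\<Prod>i\<in>S. R i (p i)))"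

definition in_SO :: "nat \<Rightarrow> (nat \<Rightarrow> nat \<Rightarrow> real) \<Rightarrow> bool" where
  "in_SO d R \<longleftrightarrow>
     (\<forall>i\<in>sp d. \<forall>j\<in>sp d. (\<Sum>k\<in>sp d. R i k * R j k) = kdelta i j) \<and> det_on (sp d) R = 1"

text \<open>The Lorentz transformation fixing l and n and acting as R on the m^i:
  new frame vector e'_a = sum_b lor d R a b e_b.\<close>
definition lor :: "nat \<Rightarrow> (nat \<Rightarrow> nat \<Rightarrow> real) \<Rightarrow> nat \<Rightarrow> nat \<Rightarrow> real" where
  "lor d R a b = (if a = 0 \<and> b = 0 then 1 else if a = 1 \<and> b = 1 then 1
                  else if a \<in> sp d \<and> b \<in> sp d then R a b else 0)"

definition transform ::
  "nat \<Rightarrow> (nat \<Rightarrow> nat \<Rightarrow> real) \<Rightarrow> (nat \<Rightarrow> nat \<Rightarrow> nat \<Rightarrow> nat \<Rightarrow> real) \<Rightarrow> nat \<Rightarrow> nat \<Rightarrow> nat \<Rightarrow> nat \<Rightarrow> real" where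
  "transform d R C a b c e =
     (\<Sum>p\<in>idx d. \<Sum>q\<in>idx d. \<Sum>r\<in>idx d. \<Sum>s\<in>idx d.
        lor d R a p * lor d R b q * lor d R c r * lor d R e s * C p q r s)"

definition SO_invariant :: "nat \<Rightarrow> (nat \<Rightarrow> nat \<Rightarrow> nat \<Rightarrow> nat \<Rightarrow> real) \<Rightarrow> bool" where
  "SO_invariant d C \<longleftrightarrow>
     (\<forall>R. in_SO d R \<longrightarrow> (\<forall>a\<in>idx d. \<forall>b\<in>idx d. \<forall>c\<in>idx d. \<forall>e\<in>idx d.
         transform d R C a b c e = C a b c e))"

definition cnt :: "nat \<Rightarrow> nat \<Rightarrow> nat \<Rightarrow> nat \<Rightarrow> nat \<Rightarrow> int" where
  "cnt x a b c e = (if a = x then 1 else 0) + (if b = x then 1 else 0)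
                 + (if c = x then 1 else 0) + (if e = x then 1 else 0)"

definition boost_weight :: "nat \<Rightarrow> nat \<Rightarrow> nat \<Rightarrow> nat \<Rightarrow> int" where
  "boost_weight a b c e = cnt 0 a b c e - cnt 1 a b c e"

definition Rbar_ij :: "nat \<Rightarrow> (nat \<Rightarrow> nat \<Rightarrow> nat \<Rightarrow> nat \<Rightarrow> real) \<Rightarrow> nat \<Rightarrow> nat \<Rightarrow> real" where
  "Rbar_ij d C i j = (\<Sum>k\<in>sp d. C k i k j)"

definition Rbar :: "nat \<Rightarrow> (nat \<Rightarrow> nat \<Rightarrow> nat \<Rightarrow> nat \<Rightarrow> real) \<Rightarrow> real" where
  "Rbar d C = (\<Sum>i\<in>sp d. Rbar_ij d C i i)"

definition Sbar :: "nat \<Rightarrow> (nat \<Rightarrow> nat \<Rightarrow> nat \<Rightarrow> nat \<Rightarrow> real) \<Rightarrow> nat \<Rightarrow> nat \<Rightarrow> real" where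
  "Sbar d C i j = Rbar_ij d C i j - Rbar d C / (real d - 2) * kdelta i j"

text \<open>Weyl part of the algebraic curvature tensor C_ijkl on R^n, n = d - 2 (standard
  Ricci decomposition, Ricci tensor Rbar_ij obtained by contracting 1st and 3rd index).\<close>
definition Cbar :: "nat \<Rightarrow> (nat \<Rightarrow> nat \<Rightarrow> nat \<Rightarrow> nat \<Rightarrow> real) \<Rightarrow> nat \<Rightarrow> nat \<Rightarrow> nat \<Rightarrow> nat \<Rightarrow> real" where
  "Cbar d C i j k l =
     (let n = real d - 2 in
      C i j k l
      - (kdelta i k * Rbar_ij d C j l - kdelta i l * Rbar_ij d C j k
         + kdelta j l * Rbar_ij d C i k - kdelta j k * Rbar_ij d C i l) / (n - 2)
      + Rbar d C * (kdelta i k * kdelta j l - kdelta i l * kdelta j k) / ((n - 1) * (n - 2)))"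

definition Acomp :: "(nat \<Rightarrow> nat \<Rightarrow> nat \<Rightarrow> nat \<Rightarrow> real) \<Rightarrow> nat \<Rightarrow> nat \<Rightarrow> real" where
  "Acomp C i j = C 0 1 i j"

definition type_Dbcd :: "nat \<Rightarrow> (nat \<Rightarrow> nat \<Rightarrow> nat \<Rightarrow> nat \<Rightarrow> real) \<Rightarrow> bool" where
  "type_Dbcd d C \<longleftrightarrow>
     (\<forall>a\<in>idx d. \<forall>b\<in>idx d. \<forall>c\<in>idx d. \<forall>e\<in>idx d. boost_weight a b c e \<noteq> 0 \<longrightarrow> C a b c e = 0) \<and>
     (\<forall>i\<in>sp d. \<forall>j\<in>sp d. Sbar d C i j = 0) \<and>
     (\<forall>i\<in>sp d. \<forall>j\<in>sp d. \<forall>k\<in>sp d. \<forall>l\<in>sp d. Cbar d C i j k l = 0) \<and>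
     (\<forall>i\<in>sp d. \<forall>j\<in>sp d. Acomp C i j = 0)"

end

theory Submission imports Defs begin

definition monoR :: "(nat \<Rightarrow> nat) \<Rightarrow> (nat \<Rightarrow> real) \<Rightarrow> nat \<Rightarrow> nat \<Rightarrow> real" where
  "monoR \<pi> s i k = (if k = \<pi> i then s i else 0)"

lemma sp_0[simp]: "0 \<notin> sp d" and sp_1[simp]: "Suc 0 \<notin> sp d" and sp_1'[simp]: "1 \<notin> sp d" by (auto simp: sp_def)
lemma fin_sp[simp]: "finite (sp d)" by (simp add: sp_def)
lemma fin_idx[simp]: "finite (idx d)" by (simp add: idx_def)
lemma idx_cases: "a \<in> idx d \<Longrightarrow> a = 0 \<or> a = 1 \<or> a \<in> sp d" by (auto simp: idx_def)
lemma sp_idx: "a \<in> sp d \<Longrightarrow> a \<in> idx d" by (auto simp: idx_def)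
lemma idx_01[simp]: "0 \<in> idx d" "1 \<in> idx d" "Suc 0 \<in> idx d" by (auto simp: idx_def)

definition SS :: "nat \<Rightarrow> (nat \<Rightarrow> real) \<Rightarrow> nat \<Rightarrow> real" where
  "SS d s x = (if x \<in> sp d then s x else 1)"

lemma perm_idx: "\<pi> permutes sp d \<Longrightarrow> a \<in> idx d \<Longrightarrow> \<pi> a \<in> idx d"
  by (metis idx_cases idx_01 permutes_in_image permutes_not_in sp_0 sp_1 One_nat_def sp_idx)

lemma lor_mono:
  assumes "\<pi> permutes sp d" "a \<in> idx d" "p \<in> idx d"
  shows "lor d (monoR \<pi> s) a p = (if p = \<pi> a then SS d s a else 0)"
proof -
  have out: "x \<notin> sp d \<Longrightarrow> \<pi> x = x" for x using assms(1) permutes_not_in by metis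
  have inn: "x \<in> sp d \<Longrightarrow> \<pi> x \<in> sp d" for x using assms(1) permutes_in_image by metis
  show ?thesis using assms(2,3) idx_cases[OF assms(2)] idx_cases[OF assms(3)]
    by (auto simp: lor_def monoR_def SS_def out dest: inn)
qed

lemma sum_single: "finite I \<Longrightarrow> x \<in> I \<Longrightarrow> (\<Sum>t\<in>I. (if t = x then c else 0) * f t) = c * (f x :: real)"
proof -
  assume a: "finite I" "x \<in> I"
  have "(\<Sum>t\<in>I. (if t = x then c else 0) * f t) = (\<Sum>t\<in>I. (if t = x then c * f x else 0))"
    by (rule sum.cong) auto
  then show ?thesis using a by simp
qed

lemma transform_mono:
  assumes "\<pi> permutes sp d" "a \<in> idx d" "b \<in> idx d" "c \<in> idx d" "e \<in> idx d"
  shows "transform d (monoR \<pi> s) C a b c e =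
     SS d s a * SS d s b * SS d s c * SS d s e * C (\<pi> a) (\<pi> b) (\<pi> c) (\<pi> e)"
proof -
  let ?L = "\<lambda>a p. if p = \<pi> a then SS d s a else 0"
  have "transform d (monoR \<pi> s) C a b c e =
    (\<Sum>p\<in>idx d. ?L a p * (\<Sum>q\<in>idx d. ?L b q * (\<Sum>r\<in>idx d. ?L c r * (\<Sum>t\<in>idx d. ?L e t * C p q r t))))"
    unfolding transform_def
    by (simp add: lor_mono assms sum_distrib_left mult.assoc cong: sum.cong)
  also have "\<dots> = SS d s a * SS d s b * SS d s c * SS d s e * C (\<pi> a) (\<pi> b) (\<pi> c) (\<pi> e)"
    by (simp add: sum_single perm_idx assms mult.assoc)
  finally show ?thesis .
qed

lemma in_SO_mono:
  assumes "\<pi> permutes sp d" "\<And>i. i \<in> sp d \<Longrightarrow> s i * s i = 1"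
    "of_int (sign \<pi>) * prod s (sp d) = 1"
  shows "in_SO d (monoR \<pi> s)"
proof -
  have inj: "\<pi> i = \<pi> j \<Longrightarrow> i = j" for i j using assms(1) permutes_inj injD by metis
  have inn: "x \<in> sp d \<Longrightarrow> \<pi> x \<in> sp d" for x using assms(1) permutes_in_image by metis
  have orth: "(\<Sum>k\<in>sp d. monoR \<pi> s i k * monoR \<pi> s j k) = kdelta i j" if "i \<in> sp d" "j \<in> sp d" for i j
  proof (cases "i = j")
    case True
    then show ?thesis using that assms(2) inn
      by (simp add: monoR_def kdelta_def if_distrib sum.delta' cong: if_cong)
  next
    case False
    then have "\<pi> i \<noteq> \<pi> j" using inj by blast
    then have h: "\<forall>k\<in>sp d. monoR \<pi> s i k * monoR \<pi> s j k = 0" by (auto simp: monoR_def)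
    have "(\<Sum>k\<in>sp d. monoR \<pi> s i k * monoR \<pi> s j k) = 0" using sum.neutral[OF h] .
    then show ?thesis using False by (simp add: kdelta_def)
  qed
  have det: "det_on (sp d) (monoR \<pi> s) = 1"
  proof -
    let ?P = "{p. p permutes sp d}"
    have fin: "finite ?P" by (simp add: finite_permutations)
    have mem: "\<pi> \<in> ?P" using assms(1) by simp
    have z: "of_int (sign p) * (\<Prod>i\<in>sp d. monoR \<pi> s i (p i)) = 0" if "p \<in> ?P - {\<pi>}" for p
    proof -
      from that have pp: "p permutes sp d" "p \<noteq> \<pi>" by auto
      then obtain i where i: "p i \<noteq> \<pi> i" by (meson ext)
      have "i \<in> sp d" using i pp(1) assms(1) permutes_not_in by metis
      moreover have "monoR \<pi> s i (p i) = 0" using i by (simp add: monoR_def)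
      ultimately have "(\<Prod>i\<in>sp d. monoR \<pi> s i (p i)) = 0" by (meson fin_sp prod_zero)
      then show ?thesis by simp
    qed
    have "det_on (sp d) (monoR \<pi> s) = of_int (sign \<pi>) * (\<Prod>i\<in>sp d. monoR \<pi> s i (\<pi> i))
       + (\<Sum>p\<in>?P - {\<pi>}. of_int (sign p) * (\<Prod>i\<in>sp d. monoR \<pi> s i (p i)))"
      unfolding det_on_def using sum.remove[OF fin mem] by simp
    also have "\<dots> = of_int (sign \<pi>) * prod s (sp d)"
      using sum.neutral[of "?P - {\<pi>}", OF ballI[OF z]] by (simp add: monoR_def)
    finally show ?thesis using assms(3) by simp
  qed
  show ?thesis unfolding in_SO_def using orth det by blast
qed

definition fl :: "nat \<Rightarrow> nat \<Rightarrow> nat \<Rightarrow> real" where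
  "fl i j x = (if x = i \<or> x = j then -1 else 1)"
definition tr :: "nat \<Rightarrow> nat \<Rightarrow> real" where
  "tr q x = (if x = q then -1 else 1)"

lemma sp_ne0: "x \<in> sp d \<Longrightarrow> x \<noteq> 0" and sp_ne1: "x \<in> sp d \<Longrightarrow> x \<noteq> 1"
  by (auto simp: sp_def)

lemma sp_ne1': "x \<in> sp d \<Longrightarrow> x \<noteq> Suc 0" using sp_ne1 by simp

lemma aux: "(n::real) \<noteq> 1 \<Longrightarrow> n \<noteq> 2 \<Longrightarrow> k*x - 2*k*(n-1)*x/(n-2) + n*(n-1)*k*x/((n-1)*(n-2)) = 0"
proof -
  assume a: "n \<noteq> 1" "n \<noteq> 2"
  have 1: "n*(n-1)*k*x/((n-1)*(n-2)) = n*k*x/(n-2)" using a by simp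
  have "k*x - 2*k*(n-1)*x/(n-2) + n*k*x/(n-2) = k*x*((n-2) - 2*(n-1) + n)/(n-2)"
    using a by (simp add: field_simps)
  also have "\<dots> = 0" by simp
  finally show ?thesis using 1 by simp
qed

definition nn :: "nat \<Rightarrow> real" where "nn d = real d - 2"
definition hh :: "nat \<Rightarrow> nat \<Rightarrow> nat \<Rightarrow> real" where
  "hh d a b = (if a \<in> sp d \<and> b \<in> sp d \<and> a = b then 1 else 0)"
definition NN :: "nat \<Rightarrow> nat \<Rightarrow> real" where
  "NN a b = (if (a = 0 \<and> b = 1) \<or> (a = 1 \<and> b = 0) then 1 else 0)"
definition KN :: "(nat \<Rightarrow> nat \<Rightarrow> real) \<Rightarrow> (nat \<Rightarrow> nat \<Rightarrow> real) \<Rightarrow> nat \<Rightarrow> nat \<Rightarrow> nat \<Rightarrow> nat \<Rightarrow> real" where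
  "KN P Q a b c e = P a c * Q b e - P a e * Q b c + Q a c * P b e - Q a e * P b c"
definition GG :: "nat \<Rightarrow> nat \<Rightarrow> nat \<Rightarrow> nat \<Rightarrow> nat \<Rightarrow> real" where
  "GG d a b c e = KN (hh d) (hh d) a b c e / 2 + (- (nn d - 1) / 2) * KN (hh d) NN a b c e
     + (nn d * (nn d - 1) / 4) * KN NN NN a b c e"

lemma card_sp: "card (sp d) = d - 2" by (simp add: sp_def)

locale W =
  fixes d :: nat and C :: "nat \<Rightarrow> nat \<Rightarrow> nat \<Rightarrow> nat \<Rightarrow> real"
  assumes d4: "4 < d" and weyl: "is_weyl d C" and inv: "SO_invariant d C"
begin

lemma sp34[simp]: "3 \<in> sp d" "4 \<in> sp d" using d4 by (auto simp: sp_def)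

lemma third: assumes "i \<in> sp d" "j \<in> sp d" obtains k where "k \<in> sp d" "k \<noteq> i" "k \<noteq> j"
proof -
  have "\<not> sp d \<subseteq> {i, j}"
  proof
    assume "sp d \<subseteq> {i, j}"
    then have "card (sp d) \<le> card {i, j}" by (simp add: card_mono)
    also have "\<dots> \<le> 2" by (simp add: card_insert_le_m1)
    finally show False using d4 by (simp add: card_sp)
  qed
  then show ?thesis using that by auto
qed

lemma inv_mono:
  assumes "\<pi> permutes sp d" "\<And>i. i \<in> sp d \<Longrightarrow> s i * s i = 1"
    "of_int (sign \<pi>) * prod s (sp d) = 1"
    "a \<in> idx d" "b \<in> idx d" "c \<in> idx d" "e \<in> idx d"
  shows "C a b c e = SS d s a * SS d s b * SS d s c * SS d s e * C (\<pi> a) (\<pi> b) (\<pi> c) (\<pi> e)"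
proof -
  have "transform d (monoR \<pi> s) C a b c e = C a b c e"
    using inv in_SO_mono[OF assms(1-3)] assms(4-7) unfolding SO_invariant_def by blast
  then show ?thesis using transform_mono[OF assms(1,4-7)] by simp
qed

lemma flip:
  assumes "i \<in> sp d" "j \<in> sp d" "i \<noteq> j" "a \<in> idx d" "b \<in> idx d" "c \<in> idx d" "e \<in> idx d"
  shows "C a b c e = fl i j a * fl i j b * fl i j c * fl i j e * C a b c e"
proof -
  have ss: "SS d (fl i j) x = fl i j x" for x using assms(1,2) by (auto simp: SS_def fl_def)
  have "prod (fl i j) (sp d) = prod (\<lambda>x. -1) (sp d \<inter> {x. x = i \<or> x = j}) * prod (\<lambda>x. 1) (sp d \<inter> - {x. x = i \<or> x = j})"
    unfolding fl_def by (rule prod.If_cases) simp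
  also have "sp d \<inter> {x. x = i \<or> x = j} = {i, j}" using assms by auto
  finally have pr: "prod (fl i j) (sp d) = 1" using assms(3) by simp
  have "C a b c e = SS d (fl i j) a * SS d (fl i j) b * SS d (fl i j) c * SS d (fl i j) e * C (id a) (id b) (id c) (id e)"
    by (rule inv_mono[OF permutes_id]) (use assms pr in \<open>auto simp: fl_def\<close>)
  then show ?thesis by (simp only: ss id_apply)
qed

lemma flip_zero:
  assumes "i \<in> sp d" "j \<in> sp d" "i \<noteq> j" "a \<in> idx d" "b \<in> idx d" "c \<in> idx d" "e \<in> idx d"
    "fl i j a * fl i j b * fl i j c * fl i j e = -1"
  shows "C a b c e = 0"
  using flip[OF assms(1-7)] assms(8) by simp

lemma swap:
  assumes "p \<in> sp d" "q \<in> sp d" "p \<noteq> q" "a \<in> idx d" "b \<in> idx d" "c \<in> idx d" "e \<in> idx d"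
  shows "C a b c e = tr q a * tr q b * tr q c * tr q e *
     C (Transposition.transpose p q a) (Transposition.transpose p q b) (Transposition.transpose p q c) (Transposition.transpose p q e)"
proof -
  have ss: "SS d (tr q) x = tr q x" for x using assms(1,2) by (auto simp: SS_def tr_def)
  have "prod (tr q) (sp d) = prod (\<lambda>x. -1) (sp d \<inter> {x. x = q}) * prod (\<lambda>x. 1) (sp d \<inter> - {x. x = q})"
    unfolding tr_def by (rule prod.If_cases) simp
  also have "sp d \<inter> {x. x = q} = {q}" using assms by auto
  finally have pr: "prod (tr q) (sp d) = -1" by simp
  have "C a b c e = SS d (tr q) a * SS d (tr q) b * SS d (tr q) c * SS d (tr q) e *
     C (Transposition.transpose p q a) (Transposition.transpose p q b) (Transposition.transpose p q c) (Transposition.transpose p q e)"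
    by (rule inv_mono) (use assms pr permutes_swap_id[OF assms(1,2)] in \<open>auto simp: tr_def sign_swap_id\<close>)
  then show ?thesis by (simp only: ss)
qed

lemma cyc:
  assumes "b \<in> sp d" "c \<in> sp d" "e \<in> sp d" "b \<noteq> c" "b \<noteq> e" "c \<noteq> e" "a \<in> idx d"
    "a \<noteq> b" "a \<noteq> c" "a \<noteq> e"
  shows "C a b c e = C a c e b"
proof -
  let ?p = "Transposition.transpose b c \<circ> Transposition.transpose c e"
  have pp: "?p permutes sp d" by (rule permutes_compose[OF permutes_swap_id permutes_swap_id]) (use assms in auto)
  have sg: "sign ?p = 1" by (simp add: sign_compose permutation_swap_id sign_swap_id assms)
  have ss: "SS d (\<lambda>_. 1) x = 1" for x by (simp add: SS_def)
  have "C a b c e = SS d (\<lambda>_. 1) a * SS d (\<lambda>_. 1) b * SS d (\<lambda>_. 1) c * SS d (\<lambda>_. 1) e * C (?p a) (?p b) (?p c) (?p e)"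
    by (rule inv_mono[OF pp]) (use assms sg sp_idx in auto)
  then have "C a b c e = C (?p a) (?p b) (?p c) (?p e)" by (simp only: ss mult_1)
  moreover have "?p a = a" "?p b = c" "?p c = e" "?p e = b" using assms by (auto simp: Transposition.transpose_def)
  ultimately show ?thesis by simp
qed

lemma s1: "a \<in> idx d \<Longrightarrow> b \<in> idx d \<Longrightarrow> c \<in> idx d \<Longrightarrow> e \<in> idx d \<Longrightarrow> C a b c e = - C b a c e"
  and s2: "a \<in> idx d \<Longrightarrow> b \<in> idx d \<Longrightarrow> c \<in> idx d \<Longrightarrow> e \<in> idx d \<Longrightarrow> C a b c e = - C a b e c"
  and s3: "a \<in> idx d \<Longrightarrow> b \<in> idx d \<Longrightarrow> c \<in> idx d \<Longrightarrow> e \<in> idx d \<Longrightarrow> C a b c e = C c e a b"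
  and bian: "a \<in> idx d \<Longrightarrow> b \<in> idx d \<Longrightarrow> c \<in> idx d \<Longrightarrow> e \<in> idx d \<Longrightarrow> C a b c e + C a c e b + C a e b c = 0"
  using weyl unfolding is_weyl_def by blast+

lemma z1[simp]: "a \<in> idx d \<Longrightarrow> c \<in> idx d \<Longrightarrow> e \<in> idx d \<Longrightarrow> C a a c e = 0"
  using s1[of a a c e] by simp
lemma z2[simp]: "a \<in> idx d \<Longrightarrow> b \<in> idx d \<Longrightarrow> c \<in> idx d \<Longrightarrow> C a b c c = 0"
  using s2[of a b c c] by simp

lemma cyc_zero:
  assumes "b \<in> sp d" "c \<in> sp d" "e \<in> sp d" "b \<noteq> c" "b \<noteq> e" "c \<noteq> e" "a \<in> idx d"
    "a \<noteq> b" "a \<noteq> c" "a \<noteq> e"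
  shows "C a b c e = 0"
proof -
  have 1: "C a b c e = C a c e b" by (rule cyc) (use assms in auto)
  have 2: "C a c e b = C a e b c" by (rule cyc) (use assms in auto)
  have "C a b c e + C a c e b + C a e b c = 0" by (rule bian) (use assms sp_idx in auto)
  then show ?thesis using 1 2 by simp
qed

definition dual :: "nat \<Rightarrow> nat" where "dual a = (if a = 0 then 1 else if a = 1 then 0 else a)"

lemma eta_dual: "a \<in> idx d \<Longrightarrow> c \<in> idx d \<Longrightarrow> eta a c = (if c = dual a then 1 else 0)"
  by (auto simp: eta_def dual_def idx_def sp_def)

lemma trace:
  assumes "b \<in> idx d" "e \<in> idx d"
  shows "C 0 b 1 e + C 1 b 0 e + (\<Sum>k\<in>sp d. C k b k e) = 0"
proof -
  have "(\<Sum>a\<in>idx d. \<Sum>c\<in>idx d. eta a c * C a b c e) = 0" using weyl assms unfolding is_weyl_def by blast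
  moreover have "(\<Sum>c\<in>idx d. eta a c * C a b c e) = C a b (dual a) e" if "a \<in> idx d" for a
  proof -
    have "dual a \<in> idx d" using that by (auto simp: dual_def)
    then show ?thesis using sum_single[of "idx d" "dual a" 1 "\<lambda>c. C a b c e"] that
      by (simp add: eta_dual cong: sum.cong)
  qed
  ultimately have "(\<Sum>a\<in>idx d. C a b (dual a) e) = 0" by simp
  moreover have "idx d = insert 0 (insert 1 (sp d))" by (auto simp: idx_def)
  moreover have "(\<Sum>a\<in>sp d. C a b (dual a) e) = (\<Sum>k\<in>sp d. C k b k e)"
    by (rule sum.cong) (auto simp: dual_def)
  ultimately show ?thesis by (simp add: dual_def)
qed


definition kap where "kap = C 3 4 3 4"

lemma step1:
  assumes "i \<in> sp d" "j \<in> sp d" "l \<in> sp d" "i \<noteq> j" "i \<noteq> l"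
  shows "C i j i j = C i l i l"
proof (cases "j = l")
  case False
  have "C i j i j = tr l i * tr l j * tr l i * tr l j *
    C (Transposition.transpose j l i) (Transposition.transpose j l j) (Transposition.transpose j l i) (Transposition.transpose j l j)"
    by (rule swap) (use assms False sp_idx in auto)
  then show ?thesis using assms False by (simp add: tr_def Transposition.transpose_def)
qed simp

lemma rev4: "i \<in> sp d \<Longrightarrow> j \<in> sp d \<Longrightarrow> C i j i j = C j i j i"
  using s1[of i j i j] s2[of j i i j] sp_idx by force

lemma E: assumes "i \<in> sp d" "j \<in> sp d" "i \<noteq> j" shows "C i j i j = kap"
proof (cases "i = 3")
  case True
  then show ?thesis using step1[of i j 4] assms by (simp add: kap_def)
next
  case False
  have "C i j i j = C i 3 i 3" using step1[of i j 3] assms False by simp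
  also have "\<dots> = C 3 i 3 i" using rev4 assms by simp
  also have "\<dots> = C 3 4 3 4" using step1[of 3 i 4] assms False by simp
  finally show ?thesis by (simp add: kap_def)
qed

lemma P2a: "x \<in> sp d \<Longrightarrow> y \<in> sp d \<Longrightarrow> x \<noteq> y \<Longrightarrow> C x y x y = kap" by (rule E)
lemma P2b: "x \<in> sp d \<Longrightarrow> y \<in> sp d \<Longrightarrow> x \<noteq> y \<Longrightarrow> C x y y x = - kap"
  using E[of x y] s2[of x y y x] sp_idx by force

lemma P4:
  assumes "x \<in> sp d" "y \<in> sp d" "z \<in> sp d" "x \<noteq> y" "x \<noteq> z" "y \<noteq> z"
  shows "C x y x z = 0" "C x y z x = 0" "C y x x z = 0" "C y x z x = 0"
  by (rule flip_zero[of x y]; use assms sp_idx in \<open>auto simp: fl_def\<close>)+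

lemma P5:
  assumes "i \<in> sp d" "j \<in> sp d" "k \<in> sp d" "l \<in> sp d" "i \<noteq> j" "i \<noteq> k" "i \<noteq> l" "j \<noteq> k" "j \<noteq> l" "k \<noteq> l"
  shows "C i j k l = 0"
  by (rule cyc_zero) (use assms sp_idx in auto)

lemma m0:
  assumes "i \<in> sp d" "j \<in> sp d" "k \<in> sp d" "l \<in> sp d"
  shows "C i j k l = kap * (kdelta i k * kdelta j l - kdelta i l * kdelta j k)"
proof -
  have I: "i \<in> idx d" "j \<in> idx d" "k \<in> idx d" "l \<in> idx d" using assms sp_idx by auto
  show ?thesis
  proof (cases "i = j")
    case True then show ?thesis using I by (simp add: kdelta_def)
  next
    case ij: False
    show ?thesis
    proof (cases "k = l")
      case True then show ?thesis using I by (simp add: kdelta_def)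
    next
      case kl: False
      show ?thesis
      proof (cases "i = k")
        case ik: True
        show ?thesis
        proof (cases "j = l")
          case True then show ?thesis using ik ij P2a[of i j] assms by (simp add: kdelta_def)
        next
          case False then show ?thesis using ik ij kl P4(1)[of i j l] assms by (simp add: kdelta_def)
        qed
      next
        case ik: False
        show ?thesis
        proof (cases "i = l")
          case il: True
          show ?thesis
          proof (cases "j = k")
            case True then show ?thesis using il ij kl P2b[of i j] assms by (simp add: kdelta_def)
          next
            case False then show ?thesis using il ij kl ik P4(2)[of i j k] assms by (simp add: kdelta_def)
          qed
        next
          case il: False
          show ?thesis
          proof (cases "j = k")
            case jk: True then show ?thesis using il ij kl ik P4(3)[of j i l] assms by (simp add: kdelta_def)
          next
            case jk: False
            show ?thesis
            proof (cases "j = l")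
              case True then show ?thesis using il ij kl ik jk P4(4)[of j i k] assms by (simp add: kdelta_def)
            next
              case False then show ?thesis using il ij kl ik jk P5[of i j k l] assms by (simp add: kdelta_def)
            qed
          qed
        qed
      qed
    qed
  qed
qed


lemma nn_card: "real (card (sp d)) = nn d" using d4 by (simp add: card_sp nn_def)

lemma m1:
  assumes "x \<in> idx d" "x \<notin> sp d" "i \<in> sp d" "j \<in> sp d" "k \<in> sp d"
  shows "C x i j k = 0"
proof -
  have I: "i \<in> idx d" "j \<in> idx d" "k \<in> idx d" using assms sp_idx by auto
  have xn: "x \<noteq> i" "x \<noteq> j" "x \<noteq> k" using assms by auto
  show ?thesis
  proof (cases "j = k")
    case True then show ?thesis using I assms by simp
  next
    case jk: False
    show ?thesis
    proof (cases "i = j")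
      case True then show ?thesis
        by (intro flip_zero[of i k]) (use assms I jk xn in \<open>auto simp: fl_def\<close>)
    next
      case ij: False
      show ?thesis
      proof (cases "i = k")
        case True then show ?thesis
          by (intro flip_zero[of i j]) (use assms I jk ij xn in \<open>auto simp: fl_def\<close>)
      next
        case False then show ?thesis
          by (intro cyc_zero) (use assms I jk ij xn in auto)
      qed
    qed
  qed
qed

lemma m1all:
  assumes "x \<in> idx d" "x \<notin> sp d" "i \<in> sp d" "j \<in> sp d" "k \<in> sp d"
  shows "C x i j k = 0" "C i x j k = 0" "C i j x k = 0" "C i j k x = 0"
proof -
  have I: "i \<in> idx d" "j \<in> idx d" "k \<in> idx d" using assms sp_idx by auto
  show 1: "C x i j k = 0" by (rule m1[OF assms])
  show "C i x j k = 0" using s1[of i x j k] I assms 1 by simp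
  show 3: "C i j x k = 0" using s3[of i j x k] I assms m1[of x k i j] by simp
  show "C i j k x = 0" using s2[of i j k x] I assms 3 by simp
qed

definition beta where "beta = C 0 3 1 3"
definition alpha where "alpha = C 0 1 0 1"

lemma m2a:
  assumes "x \<in> idx d" "x \<notin> sp d" "y \<in> idx d" "y \<notin> sp d" "i \<in> sp d" "j \<in> sp d" "i \<noteq> j"
  shows "C x i y j = 0"
proof -
  obtain z where z: "z \<in> sp d" "z \<noteq> i" "z \<noteq> j" using third assms by metis
  show ?thesis by (rule flip_zero[of i z]) (use assms z sp_idx in \<open>auto simp: fl_def\<close>)
qed

lemma m2b:
  assumes "x \<in> idx d" "x \<notin> sp d" "y \<in> idx d" "y \<notin> sp d" "i \<in> sp d" "j \<in> sp d"
  shows "C x y i j = 0"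
proof (cases "i = j")
  case True then show ?thesis using assms sp_idx by simp
next
  case False
  obtain z where z: "z \<in> sp d" "z \<noteq> i" "z \<noteq> j" using third assms by metis
  show ?thesis by (rule flip_zero[of i z]) (use assms z False sp_idx in \<open>auto simp: fl_def\<close>)
qed

lemma m2c:
  assumes "x \<in> idx d" "x \<notin> sp d" "y \<in> idx d" "y \<notin> sp d" "i \<in> sp d" "j \<in> sp d"
  shows "C i j x y = 0"
  using s3[of i j x y] m2b[OF assms] assms sp_idx by simp

lemma m2d:
  assumes "x \<in> idx d" "x \<notin> sp d" "y \<in> idx d" "y \<notin> sp d" "i \<in> sp d" "j \<in> sp d"
  shows "C x i y i = C x j y j"
proof (cases "i = j")
  case False
  have "C x i y i = tr j x * tr j i * tr j y * tr j i *
    C (Transposition.transpose i j x) (Transposition.transpose i j i) (Transposition.transpose i j y) (Transposition.transpose i j i)"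
    by (rule swap) (use assms False sp_idx in auto)
  moreover have "x \<noteq> i" "x \<noteq> j" "y \<noteq> i" "y \<noteq> j" using assms by auto
  ultimately show ?thesis using False by (simp add: tr_def)
qed simp

lemma W00: assumes "i \<in> sp d" shows "C 0 i 0 i = 0" "C 1 i 1 i = 0"
proof -
  have e: "C k x k x = C x 3 x 3" if "k \<in> sp d" "x \<in> {0,1}" for k x
  proof -
    have "C k x k x = C x k x k" using s1[of k x k x] s2[of x k k x] that sp_idx by auto
    also have "\<dots> = C x 3 x 3" using m2d[of x x k 3] that by auto
    finally show ?thesis .
  qed
  have "C 0 0 1 0 + C 1 0 0 0 + (\<Sum>k\<in>sp d. C k 0 k 0) = 0" by (rule trace) auto
  then have "(\<Sum>k\<in>sp d. C 0 3 0 3) = 0" using e[of _ 0] by simp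
  then have "C 0 3 0 3 = 0" using nn_card d4 by (simp add: nn_def)
  then show "C 0 i 0 i = 0" using m2d[of 0 0 i 3] assms by simp
  have "C 0 1 1 1 + C 1 1 0 1 + (\<Sum>k\<in>sp d. C k 1 k 1) = 0" by (rule trace) auto
  then have "(\<Sum>k\<in>sp d. C 1 3 1 3) = 0" using e[of _ 1] by simp
  then have "C 1 3 1 3 = 0" using nn_card d4 by (simp add: nn_def)
  then show "C 1 i 1 i = 0" using m2d[of 1 1 i 3] assms by simp
qed

lemma beta_val: "beta = - (nn d - 1) / 2 * kap"
proof -
  have "C 0 3 1 3 + C 1 3 0 3 + (\<Sum>k\<in>sp d. C k 3 k 3) = 0" by (rule trace) (auto intro: sp_idx)
  moreover have "C 1 3 0 3 = C 0 3 1 3" using s3[of 1 3 0 3] sp_idx by auto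
  moreover have "(\<Sum>k\<in>sp d. C k 3 k 3) = (\<Sum>k\<in>sp d. kap * (1 - kdelta k 3))"
    by (rule sum.cong) (auto simp: m0 kdelta_def)
  moreover have "(\<Sum>k\<in>sp d. kap * (1 - kdelta k 3)) = kap * (nn d - 1)"
    by (simp add: sum_distrib_left[symmetric] sum_subtractf kdelta_def nn_card)
  ultimately show ?thesis by (simp add: beta_def field_simps)
qed

lemma alpha_val: "alpha = nn d * beta"
proof -
  have "C 0 0 1 1 + C 1 0 0 1 + (\<Sum>k\<in>sp d. C k 0 k 1) = 0" by (rule trace) auto
  moreover have "C 1 0 0 1 = - C 0 1 0 1" using s1[of 1 0 0 1] by auto
  moreover have "(\<Sum>k\<in>sp d. C k 0 k 1) = (\<Sum>k\<in>sp d. beta)"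
  proof (rule sum.cong)
    fix k assume k: "k \<in> sp d"
    have "C k 0 k 1 = C 0 k 1 k" using s1[of k 0 k 1] s2[of 0 k k 1] k sp_idx by auto
    also have "\<dots> = beta" using m2d[of 0 1 k 3] k by (simp add: beta_def)
    finally show "C k 0 k 1 = beta" .
  qed simp
  ultimately show ?thesis by (simp add: alpha_def nn_card)
qed

lemma m2v:
  assumes "x \<in> {0,1}" "y \<in> {0,1}" "i \<in> sp d" "j \<in> sp d"
  shows "C x i y j = (if i = j then (if x = y then 0 else beta) else 0)"
proof (cases "i = j")
  case False then show ?thesis using m2a[of x y i j] assms by auto
next
  case True
  have "C 0 i 1 i = beta" using m2d[of 0 1 i 3] assms by (simp add: beta_def)
  moreover have "C 1 i 0 i = C 0 i 1 i" using s3[of 1 i 0 i] assms sp_idx by auto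
  ultimately show ?thesis using True W00[of i] assms by auto
qed

lemma m2all:
  assumes "x \<in> {0,1}" "y \<in> {0,1}" "i \<in> sp d" "j \<in> sp d"
  shows "C x i y j = (if i = j then (if x = y then 0 else beta) else 0)"
    "C x i j y = - (if i = j then (if x = y then 0 else beta) else 0)"
    "C i x y j = - (if i = j then (if x = y then 0 else beta) else 0)"
    "C i x j y = (if i = j then (if x = y then 0 else beta) else 0)"
    "C x y i j = 0" "C i j x y = 0"
proof -
  have I: "x \<in> idx d" "y \<in> idx d" "i \<in> idx d" "j \<in> idx d" "x \<notin> sp d" "y \<notin> sp d" using assms sp_idx by auto
  show "C x i y j = (if i = j then (if x = y then 0 else beta) else 0)" by (rule m2v[OF assms])
  show "C x i j y = - (if i = j then (if x = y then 0 else beta) else 0)" using s2[of x i j y] m2v[OF assms] I by simp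
  show "C i x y j = - (if i = j then (if x = y then 0 else beta) else 0)" using s1[of i x y j] m2v[OF assms] I by simp
  show "C i x j y = (if i = j then (if x = y then 0 else beta) else 0)" using s1[of i x j y] s2[of x i j y] m2v[OF assms] I by simp
  show "C x y i j = 0" by (rule m2b) (use I assms in auto)
  show "C i j x y = 0" by (rule m2c) (use I assms in auto)
qed

lemma m3:
  assumes "x \<in> {0,1}" "y \<in> {0,1}" "z \<in> {0,1}" "i \<in> sp d"
  shows "C i x y z = 0" "C x i y z = 0" "C x y i z = 0" "C x y z i = 0"
proof -
  obtain w where w: "w \<in> sp d" "w \<noteq> i" using third[of i i] assms by metis
  have I: "x \<in> idx d" "y \<in> idx d" "z \<in> idx d" "i \<in> idx d" "x \<notin> sp d" "y \<notin> sp d" "z \<notin> sp d" "x \<noteq> i" "y \<noteq> i" "z \<noteq> i"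
    "x \<noteq> w" "y \<noteq> w" "z \<noteq> w"
    using assms sp_idx w by auto
  show "C i x y z = 0" "C x i y z = 0" "C x y i z = 0" "C x y z i = 0"
    by (rule flip_zero[of i w]; use I w assms in \<open>auto simp: fl_def\<close>)+
qed

lemma m4: "C 0 1 0 1 = alpha" "C 0 1 1 0 = - alpha" "C 1 0 0 1 = - alpha" "C 1 0 1 0 = alpha"
  using s1[of 1 0 0 1] s2[of 0 1 1 0] s1[of 1 0 1 0] s2[of 0 1 1 0] by (auto simp: alpha_def)


lemma m4': "C 0 (Suc 0) 0 (Suc 0) = alpha" "C 0 (Suc 0) (Suc 0) 0 = - alpha" "C (Suc 0) 0 0 (Suc 0) = - alpha" "C (Suc 0) 0 (Suc 0) 0 = alpha"
  using m4 by simp_all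


lemma classify:
  assumes "a \<in> idx d" "b \<in> idx d" "c \<in> idx d" "e \<in> idx d"
  shows "C a b c e = kap * GG d a b c e"
  using idx_cases[OF assms(1)] idx_cases[OF assms(2)] idx_cases[OF assms(3)] idx_cases[OF assms(4)]
  apply (elim disjE)
  apply (simp_all add: m0 m1all m2all m3 m4 m4' sp_ne1' GG_def KN_def hh_def NN_def beta_val alpha_val sp_ne0 sp_ne1 kdelta_def sp_idx)
  apply (simp_all add: algebra_simps)
  done


lemma kd_sum: "i \<in> sp d \<Longrightarrow> j \<in> sp d \<Longrightarrow> (\<Sum>k\<in>sp d. kdelta k j * kdelta i k) = kdelta i j"
proof -
  assume a: "i \<in> sp d" "j \<in> sp d"
  have "(\<Sum>k\<in>sp d. kdelta k j * kdelta i k) = (\<Sum>k\<in>sp d. if k = j then kdelta i j else 0)"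
    by (rule sum.cong) (auto simp: kdelta_def)
  then show ?thesis using a by simp
qed

lemma Rij: assumes "i \<in> sp d" "j \<in> sp d" shows "Rbar_ij d C i j = kap * (nn d - 1) * kdelta i j"
proof -
  have "Rbar_ij d C i j = (\<Sum>k\<in>sp d. kap * (kdelta i j - kdelta k j * kdelta i k))"
    unfolding Rbar_ij_def by (rule sum.cong) (use assms in \<open>auto simp: m0 kdelta_def\<close>)
  also have "\<dots> = kap * (nn d * kdelta i j - kdelta i j)"
    by (simp add: sum_distrib_left[symmetric] sum_subtractf kd_sum assms nn_card)
  finally show ?thesis by (simp add: algebra_simps)
qed

lemma Rb: "Rbar d C = nn d * (nn d - 1) * kap"
proof -
  have "Rbar d C = (\<Sum>i\<in>sp d. kap * (nn d - 1))"
    unfolding Rbar_def by (rule sum.cong) (auto simp: Rij kdelta_def)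
  then show ?thesis by (simp add: nn_card)
qed

lemma nn_gt: "nn d > 2" using d4 by (simp add: nn_def)

lemma typeD_part:
  shows "(\<forall>i\<in>sp d. \<forall>j\<in>sp d. Sbar d C i j = 0)"
    "(\<forall>i\<in>sp d. \<forall>j\<in>sp d. \<forall>k\<in>sp d. \<forall>l\<in>sp d. Cbar d C i j k l = 0)"
    "(\<forall>i\<in>sp d. \<forall>j\<in>sp d. Acomp C i j = 0)"
proof -
  have n0: "nn d \<noteq> 0" "nn d - 1 \<noteq> 0" "nn d - 2 \<noteq> 0" using nn_gt by auto
  have rd: "real d - 2 = nn d" by (simp add: nn_def)
  show "\<forall>i\<in>sp d. \<forall>j\<in>sp d. Sbar d C i j = 0"
    using n0 by (simp add: Sbar_def Rij Rb rd)
  show "\<forall>i\<in>sp d. \<forall>j\<in>sp d. \<forall>k\<in>sp d. \<forall>l\<in>sp d. Cbar d C i j k l = 0"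
  proof (intro ballI)
    fix i j k l assume a: "i \<in> sp d" "j \<in> sp d" "k \<in> sp d" "l \<in> sp d"
    let ?D = "kdelta i k * kdelta j l - kdelta i l * kdelta j k"
    have "Cbar d C i j k l = kap * ?D - 2 * kap * (nn d - 1) * ?D / (nn d - 2)
        + nn d * (nn d - 1) * kap * ?D / ((nn d - 1) * (nn d - 2))"
      unfolding Cbar_def Let_def rd using a by (simp add: m0 Rij Rb algebra_simps)
    also have "\<dots> = 0" using n0 aux[of "nn d" kap ?D] by simp
    finally show "Cbar d C i j k l = 0" .
  qed
  show "\<forall>i\<in>sp d. \<forall>j\<in>sp d. Acomp C i j = 0"
    using m2all(5)[of 0 1] by (simp add: Acomp_def)
qed

end

lemma GG_bw:
  assumes "a \<in> idx d" "b \<in> idx d" "c \<in> idx d" "e \<in> idx d" "boost_weight a b c e \<noteq> 0"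
  shows "GG d a b c e = 0"
  using idx_cases[OF assms(1)] idx_cases[OF assms(2)] idx_cases[OF assms(3)] idx_cases[OF assms(4)] assms(5)
  apply (elim disjE)
  apply (simp_all add: boost_weight_def cnt_def GG_def KN_def hh_def NN_def sp_ne0 sp_ne1 sp_ne1')
  done


theorem mainTheorem1:
  fixes d :: nat and C :: "nat \<Rightarrow> nat \<Rightarrow> nat \<Rightarrow> nat \<Rightarrow> real"
  assumes "d > 4"
    and "is_weyl d C"
    and "SO_invariant d C"
  shows "type_Dbcd d C \<and>
         (\<exists>K :: nat \<Rightarrow> nat \<Rightarrow> nat \<Rightarrow> nat \<Rightarrow> real. \<forall>C'. is_weyl d C' \<and> SO_invariant d C' \<longrightarrow>
            (\<forall>a\<in>idx d. \<forall>b\<in>idx d. \<forall>c\<in>idx d. \<forall>e\<in>idx d. C' a b c e = Rbar d C' * K a b c e))"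
proof
  interpret W d C using assms by unfold_locales
  show "type_Dbcd d C"
    unfolding type_Dbcd_def using typeD_part by (simp add: classify GG_bw)
  show "\<exists>K :: nat \<Rightarrow> nat \<Rightarrow> nat \<Rightarrow> nat \<Rightarrow> real. \<forall>C'. is_weyl d C' \<and> SO_invariant d C' \<longrightarrow>
            (\<forall>a\<in>idx d. \<forall>b\<in>idx d. \<forall>c\<in>idx d. \<forall>e\<in>idx d. C' a b c e = Rbar d C' * K a b c e)"
  proof (intro exI allI impI ballI)
    fix C' a b c e
    assume h: "is_weyl d C' \<and> SO_invariant d C'" and idx: "a \<in> idx d" "b \<in> idx d" "c \<in> idx d" "e \<in> idx d"
    interpret V: W d C' using assms(1) h by unfold_locales auto
    have n0: "nn d \<noteq> 0" "nn d - 1 \<noteq> 0" using nn_gt by auto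
    have "C' a b c e = V.kap * GG d a b c e" by (rule V.classify[OF idx])
    also have "\<dots> = Rbar d C' * (GG d a b c e / (nn d * (nn d - 1)))"
      using n0 by (simp add: V.Rb)
    finally show "C' a b c e = Rbar d C' * (GG d a b c e / (nn d * (nn d - 1)))" .
  qed
qed

end
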